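(* If $\alpha \in \mathbb{R}_{>0}$ is transcendental, then the additive monoid $M_\alpha = \{f(\alpha) \mid f(x) \in \mathbb{N}_0[x,x^{-1}]\}$ is atomic.
   Context: $\mathbb{N}_0[x,x^{-1}]$ denotes the semiring of Laurent polynomials with coefficients in $\mathbb{N}_0$. A (reduced, additive) monoid is atomic if every nonzero element is a sum of atoms, where an atom is a nonzero element that cannot be written as a sum of two nonzero elements. *)

theory Defs
  imports "HOL-Computational_Algebra.Polynomial" Complex_Main
begin

text \<open>An element of N0[x,x^-1] is represented by its coefficient function
  c :: int => nat with finite support.\<close>

definition laurent_eval :: "(int \<Rightarrow> nat) \<Rightarrow> real \<Rightarrow> real" where
  "laurent_eval c a = (\<Sum>i\<in>{i. c i \<noteq> 0}. real (c i) * a powi i)"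

definition M_alpha :: "real \<Rightarrow> real set" where
  "M_alpha a = {laurent_eval c a | c. finite {i. c i \<noteq> 0}}"

definition is_atom :: "real set \<Rightarrow> real \<Rightarrow> bool" where
  "is_atom M x \<longleftrightarrow> x \<in> M \<and> x \<noteq> 0 \<and>
     \<not> (\<exists>y\<in>M. \<exists>z\<in>M. y \<noteq> 0 \<and> z \<noteq> 0 \<and> x = y + z)"

definition atomic_monoid :: "real set \<Rightarrow> bool" where
  "atomic_monoid M \<longleftrightarrow>
     (\<forall>x\<in>M. x \<noteq> 0 \<longrightarrow> (\<exists>as. as \<noteq> [] \<and> (\<forall>a\<in>set as. is_atom M a) \<and> sum_list as = x))"

end

theory Submission
  imports Defs
begin

lemma laurent_eval_superset:
  assumes "finite S" "{i. c i \<noteq> 0} \<subseteq> S"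
  shows "laurent_eval c a = (\<Sum>i\<in>S. real (c i) * a powi i)"
  unfolding laurent_eval_def
  by (rule sum.mono_neutral_left) (use assms in auto)

lemma laurent_eval_inj:
  fixes \<alpha> :: real
  assumes "\<alpha> > 0" "\<not> algebraic \<alpha>"
    and fc: "finite {i. c i \<noteq> 0}" and fd: "finite {i. d i \<noteq> 0}"
    and eq: "laurent_eval c \<alpha> = laurent_eval d \<alpha>"
  shows "c = d"
proof -
  define S where "S = {i. c i \<noteq> 0} \<union> {i. d i \<noteq> 0}"
  have fS: "finite S" using fc fd by (simp add: S_def)
  obtain N :: int where N: "\<And>i. i \<in> S \<Longrightarrow> i + N \<ge> 0"
  proof -
    have "bdd_below S" using fS by (rule bdd_below_finite)
    then obtain m where "\<And>i. i \<in> S \<Longrightarrow> m \<le> i" by (auto simp: bdd_below_def)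
    then show ?thesis using that[of "- m"] by force
  qed
  define e where "e i = real_of_int (int (c i) - int (d i))" for i
  define p where "p = (\<Sum>i\<in>S. monom (e i) (nat (i + N)))"
  have coeff_p: "coeff p k = (\<Sum>i\<in>S. if nat (i + N) = k then e i else 0)" for k
    unfolding p_def by (simp add: coeff_sum coeff_monom)
  have ints: "\<forall>k. coeff p k \<in> \<int>"
  proof
    fix k show "coeff p k \<in> \<int>" unfolding coeff_p by (intro Ints_sum) (auto simp: e_def)
  qed
  have ec: "laurent_eval c \<alpha> = (\<Sum>i\<in>S. real (c i) * \<alpha> powi i)"
    by (rule laurent_eval_superset) (use fS in \<open>auto simp: S_def\<close>)
  have ed: "laurent_eval d \<alpha> = (\<Sum>i\<in>S. real (d i) * \<alpha> powi i)"
    by (rule laurent_eval_superset) (use fS in \<open>auto simp: S_def\<close>)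
  have pw: "\<alpha> ^ nat (i + N) = \<alpha> powi i * \<alpha> powi N" if "i \<in> S" for i
  proof -
    have "\<alpha> ^ nat (i + N) = \<alpha> powi (i + N)"
      using N[OF that] by (metis int_nat_eq power_int_of_nat)
    also have "\<dots> = \<alpha> powi i * \<alpha> powi N" using assms(1) by (simp add: power_int_add)
    finally show ?thesis .
  qed
  have "poly p \<alpha> = (\<Sum>i\<in>S. e i * \<alpha> ^ nat (i + N))"
    unfolding p_def by (simp add: poly_sum poly_monom)
  also have "\<dots> = (\<Sum>i\<in>S. (real (c i) * \<alpha> powi i - real (d i) * \<alpha> powi i) * \<alpha> powi N)"
    by (rule sum.cong) (auto simp: pw e_def algebra_simps)
  also have "\<dots> = (laurent_eval c \<alpha> - laurent_eval d \<alpha>) * \<alpha> powi N"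
    by (simp add: ec ed sum_distrib_right[symmetric] sum_subtractf)
  also have "\<dots> = 0" using eq by simp
  finally have "poly p \<alpha> = 0" .
  with ints assms(2) have p0: "p = 0" unfolding algebraic_def by blast
  show "c = d"
  proof
    fix j
    show "c j = d j"
    proof (cases "j \<in> S")
      case False then show ?thesis by (auto simp: S_def)
    next
      case True
      have "coeff p (nat (j + N)) = (\<Sum>i\<in>S. if i = j then e i else 0)"
        unfolding coeff_p
      proof (rule sum.cong)
        fix i assume "i \<in> S"
        then show "(if nat (i + N) = nat (j + N) then e i else 0) = (if i = j then e i else 0)"
          using N[of i] N[OF True] by (auto simp: nat_eq_iff2)
      qed simp
      also have "\<dots> = e j" using True fS by simp
      finally show ?thesis using p0 by (simp add: e_def)
    qed
  qed
qed

lemma sum_list_concat': "sum_list (concat xss) = sum_list (map sum_list (xss :: real list list))"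
  by (induct xss) auto

lemma laurent_eval_zero: "laurent_eval (\<lambda>_. 0) a = 0"
  by (simp add: laurent_eval_def)

lemma atom_pow:
  fixes \<alpha> :: real
  assumes "\<alpha> > 0" "\<not> algebraic \<alpha>"
  shows "is_atom (M_alpha \<alpha>) (\<alpha> powi i)"
proof -
  define \<delta> where "\<delta> = (\<lambda>j. if j = i then 1 else 0 :: nat)"
  have s\<delta>: "{j. \<delta> j \<noteq> 0} = {i}" by (auto simp: \<delta>_def)
  have ev\<delta>: "laurent_eval \<delta> \<alpha> = \<alpha> powi i"
    unfolding laurent_eval_def s\<delta> by (simp add: \<delta>_def)
  have "\<alpha> powi i \<in> M_alpha \<alpha>"
  proof -
    have "\<alpha> powi i = laurent_eval \<delta> \<alpha> \<and> finite {j. \<delta> j \<noteq> 0}" using ev\<delta> s\<delta> by simp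
    then show ?thesis unfolding M_alpha_def by blast
  qed
  moreover have "\<alpha> powi i \<noteq> 0" using assms(1) by simp
  moreover have "\<not> (\<exists>y\<in>M_alpha \<alpha>. \<exists>z\<in>M_alpha \<alpha>. y \<noteq> 0 \<and> z \<noteq> 0 \<and> \<alpha> powi i = y + z)"
  proof
    assume "\<exists>y\<in>M_alpha \<alpha>. \<exists>z\<in>M_alpha \<alpha>. y \<noteq> 0 \<and> z \<noteq> 0 \<and> \<alpha> powi i = y + z"
    then obtain f g where ff: "finite {i. f i \<noteq> 0}" and fg: "finite {i. g i \<noteq> 0}"
      and y0: "laurent_eval f \<alpha> \<noteq> 0" and z0: "laurent_eval g \<alpha> \<noteq> 0"
      and sum: "\<alpha> powi i = laurent_eval f \<alpha> + laurent_eval g \<alpha>"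
      unfolding M_alpha_def by blast
    define h where "h = (\<lambda>j. f j + g j)"
    have hsub: "{j. h j \<noteq> 0} = {j. f j \<noteq> 0} \<union> {j. g j \<noteq> 0}" by (auto simp: h_def)
    have fh: "finite {j. h j \<noteq> 0}" using ff fg hsub by simp
    have "laurent_eval h \<alpha> = laurent_eval f \<alpha> + laurent_eval g \<alpha>"
    proof -
      have fU: "finite ({j. f j \<noteq> 0} \<union> {j. g j \<noteq> 0})" using ff fg by simp
      show ?thesis
        using laurent_eval_superset[OF fU, of h \<alpha>] laurent_eval_superset[OF fU, of f \<alpha>]
          laurent_eval_superset[OF fU, of g \<alpha>] hsub
        by (simp add: h_def sum.distrib algebra_simps)
    qed
    with sum ev\<delta> have "laurent_eval h \<alpha> = laurent_eval \<delta> \<alpha>" by simp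
    from laurent_eval_inj[OF assms fh _ this] s\<delta> have h\<delta>: "h = \<delta>" by simp
    have "f = (\<lambda>_. 0) \<or> g = (\<lambda>_. 0)"
    proof (cases "f i = 0")
      case True
      then have "f = (\<lambda>_. 0)"
        using h\<delta> by (auto simp: fun_eq_iff h_def \<delta>_def split: if_splits)
      then show ?thesis by simp
    next
      case False
      then have "g i = 0" using fun_cong[OF h\<delta>, of i] by (simp add: h_def \<delta>_def)
      then have "g = (\<lambda>_. 0)"
        using h\<delta> by (auto simp: fun_eq_iff h_def \<delta>_def split: if_splits)
      then show ?thesis by simp
    qed
    then show False using y0 z0 laurent_eval_zero by auto
  qed
  ultimately show ?thesis unfolding is_atom_def by blast
qed

theorem corollary3p2:
  fixes \<alpha> :: real
  assumes "\<alpha> > 0" and "\<not> algebraic \<alpha>"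
  shows "atomic_monoid (M_alpha \<alpha>)"
  unfolding atomic_monoid_def
proof (intro ballI impI)
  fix x assume xM: "x \<in> M_alpha \<alpha>" and x0: "x \<noteq> 0"
  then obtain c where fc: "finite {i. c i \<noteq> 0}" and xc: "x = laurent_eval c \<alpha>"
    unfolding M_alpha_def by blast
  define S where "S = {i. c i \<noteq> 0}"
  define as where "as = concat (map (\<lambda>i. replicate (c i) (\<alpha> powi i)) (sorted_list_of_set S))"
  have "sum_list as = sum_list (map (\<lambda>i. real (c i) * \<alpha> powi i) (sorted_list_of_set S))"
    unfolding as_def by (simp add: sum_list_concat' comp_def sum_list_replicate)
  also have "\<dots> = (\<Sum>i\<in>S. real (c i) * \<alpha> powi i)"
    using fc by (simp add: sum_list_distinct_conv_sum_set S_def)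
  also have "\<dots> = x" by (simp add: xc laurent_eval_def S_def)
  finally have sx: "sum_list as = x" .
  have "as \<noteq> []" using sx x0 by auto
  moreover have "\<forall>a\<in>set as. is_atom (M_alpha \<alpha>) a"
    unfolding as_def using atom_pow[OF assms] by auto
  ultimately show "\<exists>as. as \<noteq> [] \<and> (\<forall>a\<in>set as. is_atom (M_alpha \<alpha>) a) \<and> sum_list as = x"
    using sx by blast
qed

end
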